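(* Let $f$ be the harmonic function on $K$ with $f(p_0)=\alpha$, $f(p_1)=\beta$, $f(p_2)=\gamma$. Then the restriction of $f$ to the edge $[p_1,p_2]$, viewed as a function on $[0,1]$, is strictly increasing if and only if $\beta<\gamma$ and $2\beta-\gamma\le\alpha\le2\gamma-\beta$. Equivalently, for nonconstant $f$, the restriction is strictly monotone if and only if $(3\beta-\delta)(3\gamma-\delta)\le0$, where $\delta=\alpha+\beta+\gamma$.
   Context: Let $p_0,p_1,p_2$ be the vertices of a unit equilateral triangle in $\mathbb{R}^2$, $F_i(x)=(x+p_i)/2$, and $K$ the Sierpinski gasket (the attractor of $F_0,F_1,F_2$). Minimal triangles of the graph $G_m$ are the triangles with vertices $F_w(p_0),F_w(p_1),F_w(p_2)$ for words $w$ of length $m$ ($F_w$ the corresponding composition). A continuous $f:K\to\mathbb{R}$ is harmonic if for every $m\ge0$ and every minimal triangle of $G_m$ with vertices $v_i,v_j,v_k$, the value at the midpoint $v_{ij}$ of $[v_i,v_j]$ is $\frac15(2f(v_i)+2f(v_j)+f(v_k))$; such $f$ is uniquely determined by $(f(p_0),f(p_1),f(p_2))$. The edge $[p_1,p_2]$ is identified with $[0,1]$ via $t\mapsto p_1+t(p_2-p_1)$. *)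

theory Defs
  imports "HOL-Analysis.Analysis"
begin

text \<open>We model the plane R^2 by the complex numbers. The unit equilateral triangle
  is placed with p1 = 0, p2 = 1 and p0 = 1/2 + i sqrt 3 / 2.\<close>

definition SG_p :: "nat \<Rightarrow> complex" where
  "SG_p i = (if i = 0 then Complex (1/2) (sqrt 3 / 2) else if i = 1 then 0 else 1)"

definition SG_F :: "nat \<Rightarrow> complex \<Rightarrow> complex" where
  "SG_F i x = (x + SG_p i) / 2"

definition SG_Fw :: "nat list \<Rightarrow> complex \<Rightarrow> complex" where
  "SG_Fw w = foldr (\<lambda>i g. SG_F i \<circ> g) w id"

definition SG_K :: "complex set" where
  "SG_K = (THE K. compact K \<and> K \<noteq> {} \<and> K = (\<Union>i\<in>{0,1,2}. SG_F i ` K))"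

definition SG_harmonic :: "(complex \<Rightarrow> real) \<Rightarrow> bool" where
  "SG_harmonic f \<longleftrightarrow> continuous_on SG_K f \<and>
     (\<forall>w i j k. set w \<subseteq> {0,1,2} \<and> {i,j,k} = {0,1,2::nat} \<longrightarrow>
        f ((SG_Fw w (SG_p i) + SG_Fw w (SG_p j)) / 2) =
          (2 * f (SG_Fw w (SG_p i)) + 2 * f (SG_Fw w (SG_p j)) + f (SG_Fw w (SG_p k))) / 5)"

definition SG_edge :: "(complex \<Rightarrow> real) \<Rightarrow> real \<Rightarrow> real" where
  "SG_edge f t = f (SG_p 1 + complex_of_real t * (SG_p 2 - SG_p 1))"

end

theory Submission
  imports Defs
begin


lemma Fw_Nil[simp]: "SG_Fw [] = id" by (simp add: SG_Fw_def)
lemma Fw_Cons[simp]: "SG_Fw (i#w) = SG_F i \<circ> SG_Fw w" by (simp add: SG_Fw_def)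
lemma Fw_snoc: "SG_Fw (w@[i]) = SG_Fw w \<circ> SG_F i"
  by (induction w) auto

lemma p_simps[simp]: "SG_p 0 = Complex (1/2) (sqrt 3 / 2)" "SG_p (Suc 0) = 0" "SG_p 2 = 1"
  by (auto simp: SG_p_def)

lemma Fw_affine: "SG_Fw w x = SG_Fw w 0 + x / 2 ^ length w"
proof (induction w arbitrary: x)
  case Nil then show ?case by simp
next
  case (Cons i w)
  show ?case using Cons[of x] by (simp add: SG_F_def field_simps)
qed

lemma Fw_diff: "SG_Fw w x - SG_Fw w y = (x - y) / 2 ^ length w"
  by (subst (1 2) Fw_affine) (simp add: diff_divide_distrib)

lemma Fw_mid: "SG_Fw w ((x + y)/2) = (SG_Fw w x + SG_Fw w y) / 2"
  by (subst (1 2 3) Fw_affine) (simp add: field_simps)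

lemma F_fix: "SG_F i (SG_p i) = SG_p i" by (simp add: SG_F_def)

lemma harm_mid:
  assumes "SG_harmonic f" "set w \<subseteq> {0,1,2}" "{i,j,k} = {0,1,2::nat}"
  shows "f (SG_Fw (w@[i]) (SG_p j)) =
    (2 * f (SG_Fw w (SG_p i)) + 2 * f (SG_Fw w (SG_p j)) + f (SG_Fw w (SG_p k))) / 5"
proof -
  have "SG_Fw (w@[i]) (SG_p j) = (SG_Fw w (SG_p i) + SG_Fw w (SG_p j)) / 2"
    by (simp add: Fw_snoc SG_F_def Fw_mid add.commute)
  then show ?thesis using assms unfolding SG_harmonic_def by metis
qed

lemma harm_neg: "SG_harmonic f \<Longrightarrow> SG_harmonic (\<lambda>x. - f x)"
  unfolding SG_harmonic_def
  by (auto intro: continuous_on_minus simp: field_simps)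

lemma edge_eq: "SG_edge f t = f (complex_of_real t)"
  by (simp add: SG_edge_def)



definition SG_V :: "complex set" where
  "SG_V = {SG_Fw w (SG_p j) | w j. set w \<subseteq> {0,1,2} \<and> j \<le> 2}"

lemma V_mem: "set w \<subseteq> {0,1,2} \<Longrightarrow> j \<le> 2 \<Longrightarrow> SG_Fw w (SG_p j) \<in> SG_V"
  unfolding SG_V_def by blast

lemma norm_p: "norm (SG_p j) \<le> 1"
proof -
  have "cmod (Complex (1/2) (sqrt 3 / 2)) = 1"
    by (simp add: cmod_def power_divide)
  then show ?thesis by (auto simp: SG_p_def)
qed

lemma norm_Fw_p: "norm (SG_Fw w (SG_p j)) \<le> 1"
proof (induction w)
  case Nil then show ?case using norm_p by simp
next
  case (Cons i w)
  have "norm (SG_Fw w (SG_p j) + SG_p i) \<le> 2"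
    using norm_triangle_ineq[of "SG_Fw w (SG_p j)" "SG_p i"] Cons norm_p[of i] by linarith
  then show ?case by (simp add: SG_F_def norm_divide)
qed

lemma V_bounded: "bounded SG_V"
  unfolding bounded_iff SG_V_def using norm_Fw_p by blast

lemma V_ne: "SG_p 0 \<in> SG_V"
  unfolding SG_V_def by (rule CollectI, rule exI[of _ "[]"], rule exI[of _ 0]) simp

lemma cont_F: "continuous_on S (SG_F i)"
  unfolding SG_F_def by (intro continuous_intros) auto

lemma V_step: "i \<in> {0,1,2} \<Longrightarrow> SG_F i ` SG_V \<subseteq> SG_V"
proof
  assume i: "i \<in> {0,1,2}"
  fix x assume "x \<in> SG_F i ` SG_V"
  then obtain w j where x: "x = SG_F i (SG_Fw w (SG_p j))" "set w \<subseteq> {0,1,2}" "j \<le> 2"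
    unfolding SG_V_def by blast
  then have "x = SG_Fw (i#w) (SG_p j)" "set (i#w) \<subseteq> {0,1,2}" using i by auto
  then show "x \<in> SG_V" unfolding SG_V_def using x(3) by blast
qed

lemma V_sub: "SG_V \<subseteq> (\<Union>i\<in>{0,1,2}. SG_F i ` SG_V)"
proof
  fix x assume "x \<in> SG_V"
  then obtain w j where x: "x = SG_Fw w (SG_p j)" "set w \<subseteq> {0,1,2}" "j \<le> 2"
    unfolding SG_V_def by blast
  show "x \<in> (\<Union>i\<in>{0,1,2}. SG_F i ` SG_V)"
  proof (cases w)
    case Nil
    have "x = SG_F j (SG_Fw [] (SG_p j))" using x Nil F_fix by simp
    moreover have "SG_Fw [] (SG_p j) \<in> SG_V" using V_mem[of "[]" j] x(3) by simp
    moreover have "j \<in> {0,1,2}" using x by auto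
    ultimately show ?thesis by blast
  next
    case (Cons i w')
    have "x = SG_F i (SG_Fw w' (SG_p j))" using x Cons by simp
    moreover have "SG_Fw w' (SG_p j) \<in> SG_V" using V_mem x(2,3) Cons by simp
    moreover have "i \<in> {0,1,2}" using x Cons by auto
    ultimately show ?thesis by blast
  qed
qed

lemma clV_compact: "compact (closure SG_V)"
  using V_bounded by (simp add: compact_closure)

lemma clV_inv: "closure SG_V = (\<Union>i\<in>{0,1,2}. SG_F i ` closure SG_V)"
proof
  have c: "compact (SG_F i ` closure SG_V)" for i
    by (rule compact_continuous_image[OF cont_F clV_compact])
  have "closed (\<Union>i\<in>{0,1,2}. SG_F i ` closure SG_V)"
    using c compact_imp_closed by (intro closed_UN) auto
  moreover have "SG_V \<subseteq> (\<Union>i\<in>{0,1,2}. SG_F i ` closure SG_V)"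
  proof -
    have "(\<Union>i\<in>{0,1,2}. SG_F i ` SG_V) \<subseteq> (\<Union>i\<in>{0,1,2}. SG_F i ` closure SG_V)"
      by (intro UN_mono image_mono closure_subset order_refl)
    then show ?thesis using V_sub by (rule order_trans[rotated])
  qed
  ultimately show "closure SG_V \<subseteq> (\<Union>i\<in>{0,1,2}. SG_F i ` closure SG_V)"
    by (rule closure_minimal[rotated])
next
  have "SG_F i ` closure SG_V \<subseteq> closure SG_V" if "i \<in> {0,1,2}" for i
  proof -
    have "SG_F i ` SG_V \<subseteq> closure SG_V" using V_step[OF that] closure_subset by (rule order_trans)
    then show ?thesis by (rule image_closure_subset[OF cont_F closed_closure])
  qed
  then show "(\<Union>i\<in>{0,1,2}. SG_F i ` closure SG_V) \<subseteq> closure SG_V" by blast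
qed

lemma attractor_unique:
  assumes K: "compact K" "K \<noteq> {}" "K = (\<Union>i\<in>{0,1,2}. SG_F i ` K)"
  shows "K = closure SG_V"
proof -
  have inv: "SG_F i x \<in> K" if "i \<in> {0,1,2}" "x \<in> K" for i x
    by (subst K(3)) (use that in blast)
  have Kdec: "\<exists>i\<in>{0,1,2}. \<exists>y\<in>K. x = SG_F i y" if "x \<in> K" for x
  proof -
    have "x \<in> (\<Union>i\<in>{0,1,2}. SG_F i ` K)" using that by (subst (asm) K(3))
    then show ?thesis by blast
  qed
  obtain y where y: "y \<in> K" using K(2) by blast
  have pK: "SG_p j \<in> K" if "j \<le> 2" for j
  proof -
    define s where "s n = (SG_F j ^^ n) y" for n
    have j3: "j \<in> {0,1,2}" using that by auto
    have sS: "s (Suc n) = SG_F j (s n)" for n by (simp add: s_def)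
    have sK: "s n \<in> K" for n
    proof (induction n)
      case 0 then show ?case using y by (simp add: s_def)
    next
      case (Suc n) then show ?case using inv[OF j3] sS by simp
    qed
    have sd: "s n - SG_p j = (y - SG_p j) / 2 ^ n" for n
    proof (induction n)
      case 0 then show ?case by (simp add: s_def)
    next
      case (Suc n)
      have "s (Suc n) - SG_p j = (s n - SG_p j) / 2" unfolding sS SG_F_def by (simp add: field_simps)
      then show ?case using Suc by simp
    qed
    have "(\<lambda>n. (y - SG_p j) * (1/2) ^ n) \<longlonglongrightarrow> 0"
      by (intro tendsto_mult_right_zero LIMSEQ_power_zero) simp
    then have "(\<lambda>n. (y - SG_p j) / 2 ^ n) \<longlonglongrightarrow> 0" by (simp add: power_divide)
    then have "(\<lambda>n. s n - SG_p j) \<longlonglongrightarrow> 0" using sd by simp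
    then have "s \<longlonglongrightarrow> SG_p j" using Lim_null by (simp add: LIM_zero_iff)
    then show ?thesis using sK compact_imp_closed[OF K(1)] closed_sequentially by blast
  qed
  have "SG_Fw w (SG_p j) \<in> K" if "set w \<subseteq> {0,1,2}" "j \<le> 2" for w j
    using that by (induction w) (auto intro!: inv pK)
  then have "SG_V \<subseteq> K" unfolding SG_V_def by blast
  then have C1: "closure SG_V \<subseteq> K" using compact_imp_closed[OF K(1)] closure_minimal by blast
  have dec: "\<exists>w z. length w = n \<and> set w \<subseteq> {0,1,2} \<and> z \<in> K \<and> x = SG_Fw w z" if "x \<in> K" for n x
    using that
  proof (induction n arbitrary: x)
    case 0 then show ?case by (intro exI[of _ "[]"]) auto
  next
    case (Suc n)
    then obtain i y where "i \<in> {0,1,2}" "y \<in> K" "x = SG_F i y" using Kdec by meson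
    with Suc.IH[OF \<open>y \<in> K\<close>] obtain w z where "length w = n" "set w \<subseteq> {0,1,2}" "z \<in> K" "y = SG_Fw w z"
      by blast
    moreover have "x = SG_Fw (i#w) z" using \<open>x = _\<close> \<open>y = _\<close> by simp
    moreover have "set (i#w) \<subseteq> {0,1,2}" using \<open>i \<in> _\<close> \<open>set w \<subseteq> _\<close> by simp
    ultimately show ?case by (intro exI[of _ "i#w"] exI[of _ z]) simp
  qed
  obtain M where M: "\<forall>z\<in>K. norm z \<le> M" using compact_imp_bounded[OF K(1)] bounded_iff by blast
  have "K \<subseteq> closure SG_V"
  proof
    fix x assume x: "x \<in> K"
    have "norm y \<le> M" using M y by blast
    then have "M \<ge> 0" using norm_ge_zero[of y] by linarith
    show "x \<in> closure SG_V"
      unfolding closure_approachable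
    proof (intro allI impI)
      fix e :: real assume e: "e > 0"
      have "e / (M + 1) > 0" using e \<open>M \<ge> 0\<close> by simp
      from real_arch_pow_inv[OF this, of "1/2"] obtain n where n: "(1/2::real) ^ n < e / (M + 1)"
        by auto
      obtain w z where wz: "length w = n" "set w \<subseteq> {0,1,2}" "z \<in> K" "x = SG_Fw w z"
        using dec[OF x] by blast
      have "SG_Fw w (SG_p 0) \<in> SG_V" by (rule V_mem[OF wz(2)]) simp
      moreover have "dist (SG_Fw w (SG_p 0)) x < e"
      proof -
        have "dist (SG_Fw w (SG_p 0)) x = norm (SG_p 0 - z) / 2 ^ n"
          using Fw_diff[of w "SG_p 0" z] wz by (simp add: dist_norm norm_divide norm_power)
        moreover have "norm (SG_p 0 - z) \<le> M + 1"
        proof -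
          have "norm z \<le> M" using M wz(3) by blast
          then show ?thesis using norm_triangle_ineq4[of "SG_p 0" z] norm_p[of 0] by linarith
        qed
        then have "norm (SG_p 0 - z) / 2 ^ n \<le> (M + 1) * (1/2) ^ n"
          by (simp add: divide_right_mono power_divide)
        moreover have "(1/2::real) ^ n * (M + 1) < e"
          using n \<open>M \<ge> 0\<close> by (simp add: pos_less_divide_eq)
        ultimately show ?thesis by (simp add: mult.commute)
      qed
      ultimately show "\<exists>y\<in>SG_V. dist y x < e" by blast
    qed
  qed
  then show ?thesis using C1 by blast
qed

lemma K_eq: "SG_K = closure SG_V"
  unfolding SG_K_def
proof (rule the_equality)
  show "compact (closure SG_V) \<and> closure SG_V \<noteq> {} \<and> closure SG_V = (\<Union>i\<in>{0,1,2}. SG_F i ` closure SG_V)"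
    using clV_compact clV_inv V_ne closure_subset by blast
next
  fix K assume that: "compact K \<and> K \<noteq> {} \<and> K = (\<Union>i\<in>{0,1,2}. SG_F i ` K)"
  then show "K = closure SG_V" by (intro attractor_unique conjunct1[OF that] conjunct1[OF conjunct2[OF that]] conjunct2[OF conjunct2[OF that]])
qed



lemma rec1:
  assumes h: "SG_harmonic f" and w: "set w \<subseteq> {0,1,2}"
  shows "f (SG_Fw (w@[1]) (SG_p 1)) = f (SG_Fw w (SG_p 1))"
    "f (SG_Fw (w@[1]) (SG_p 2)) = (2 * f (SG_Fw w (SG_p 1)) + 2 * f (SG_Fw w (SG_p 2)) + f (SG_Fw w (SG_p 0))) / 5"
    "f (SG_Fw (w@[1]) (SG_p 0)) = (2 * f (SG_Fw w (SG_p 1)) + 2 * f (SG_Fw w (SG_p 0)) + f (SG_Fw w (SG_p 2))) / 5"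
proof -
  show "f (SG_Fw (w@[1]) (SG_p 1)) = f (SG_Fw w (SG_p 1))"
    by (simp only: Fw_snoc comp_apply F_fix)
  show "f (SG_Fw (w@[1]) (SG_p 2)) = (2 * f (SG_Fw w (SG_p 1)) + 2 * f (SG_Fw w (SG_p 2)) + f (SG_Fw w (SG_p 0))) / 5"
    by (rule harm_mid[OF h w]) auto
  show "f (SG_Fw (w@[1]) (SG_p 0)) = (2 * f (SG_Fw w (SG_p 1)) + 2 * f (SG_Fw w (SG_p 0)) + f (SG_Fw w (SG_p 2))) / 5"
    by (rule harm_mid[OF h w]) auto
qed

lemma rec2:
  assumes h: "SG_harmonic f" and w: "set w \<subseteq> {0,1,2}"
  shows "f (SG_Fw (w@[2]) (SG_p 2)) = f (SG_Fw w (SG_p 2))"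
    "f (SG_Fw (w@[2]) (SG_p 1)) = (2 * f (SG_Fw w (SG_p 2)) + 2 * f (SG_Fw w (SG_p 1)) + f (SG_Fw w (SG_p 0))) / 5"
    "f (SG_Fw (w@[2]) (SG_p 0)) = (2 * f (SG_Fw w (SG_p 2)) + 2 * f (SG_Fw w (SG_p 0)) + f (SG_Fw w (SG_p 1))) / 5"
proof -
  show "f (SG_Fw (w@[2]) (SG_p 2)) = f (SG_Fw w (SG_p 2))"
    by (simp only: Fw_snoc comp_apply F_fix)
  show "f (SG_Fw (w@[2]) (SG_p 1)) = (2 * f (SG_Fw w (SG_p 2)) + 2 * f (SG_Fw w (SG_p 1)) + f (SG_Fw w (SG_p 0))) / 5"
    by (rule harm_mid[OF h w]) auto
  show "f (SG_Fw (w@[2]) (SG_p 0)) = (2 * f (SG_Fw w (SG_p 2)) + 2 * f (SG_Fw w (SG_p 0)) + f (SG_Fw w (SG_p 1))) / 5"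
    by (rule harm_mid[OF h w]) auto
qed

definition goodP :: "real \<Rightarrow> real \<Rightarrow> real \<Rightarrow> bool" where
  "goodP a b c \<longleftrightarrow> b < c \<and> 2 * b - c \<le> a \<and> a \<le> 2 * c - b"

lemma inv_good:
  assumes h: "SG_harmonic f"
    and g: "goodP (f (SG_p 0)) (f (SG_p 1)) (f (SG_p 2))"
    and w: "set w \<subseteq> {1,2}"
  shows "goodP (f (SG_Fw w (SG_p 0))) (f (SG_Fw w (SG_p 1))) (f (SG_Fw w (SG_p 2)))"
  using w
proof (induction w rule: rev_induct)
  case Nil then show ?case using g by simp
next
  case (snoc i w)
  then have w': "set w \<subseteq> {1,2}" and i: "i = 1 \<or> i = 2" by auto
  have w0: "set w \<subseteq> {0,1,2}" using w' by auto
  have IH: "goodP (f (SG_Fw w (SG_p 0))) (f (SG_Fw w (SG_p 1))) (f (SG_Fw w (SG_p 2)))"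
    using snoc.IH[OF w'] .
  from i show ?case
  proof
    assume "i = 1"
    then show ?thesis using rec1[OF h w0] IH unfolding goodP_def by (simp; linarith)
  next
    assume "i = 2"
    then show ?thesis using rec2[OF h w0] IH unfolding goodP_def by (simp; linarith)
  qed
qed

lemma word_exists:
  "k < 2 ^ n \<Longrightarrow> \<exists>w. set w \<subseteq> {1,2} \<and> length w = n \<and> SG_Fw w 0 = of_nat k / 2 ^ n"
proof (induction n arbitrary: k)
  case 0 then show ?case by (intro exI[of _ "[]"]) simp
next
  case (Suc n)
  show ?case
  proof (cases "k < 2 ^ n")
    case True
    then obtain w where w: "set w \<subseteq> {1,2}" "length w = n" "SG_Fw w 0 = of_nat k / 2 ^ n"
      using Suc.IH by blast
    have "SG_Fw (1#w) 0 = of_nat k / 2 ^ Suc n"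
      using w(3) by (simp add: SG_F_def SG_p_def)
    then show ?thesis using w by (intro exI[of _ "1#w"]) simp
  next
    case False
    then have "k - 2^n < 2^n" using Suc.prems by simp
    then obtain w where w: "set w \<subseteq> {1,2}" "length w = n" "SG_Fw w 0 = of_nat (k - 2^n) / 2 ^ n"
      using Suc.IH by blast
    have "SG_Fw (2#w) 0 = of_nat k / 2 ^ Suc n"
      using w(3) False by (simp add: SG_F_def SG_p_def of_nat_diff field_simps)
    then show ?thesis using w by (intro exI[of _ "2#w"]) simp
  qed
qed

lemma dyadic_step:
  assumes h: "SG_harmonic f"
    and g: "goodP (f (SG_p 0)) (f (SG_p 1)) (f (SG_p 2))"
    and k: "k < 2 ^ n"
  shows "f (of_nat k / 2 ^ n) < f (of_nat (Suc k) / 2 ^ n)"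
proof -
  obtain w where w: "set w \<subseteq> {1,2}" "length w = n" "SG_Fw w 0 = of_nat k / 2 ^ n"
    using word_exists[OF k] by blast
  have "SG_Fw w (SG_p 1) = of_nat k / 2 ^ n" using w by (simp add: SG_p_def)
  moreover have "SG_Fw w (SG_p 2) = of_nat (Suc k) / 2 ^ n"
    using w Fw_affine[of w 1] by (simp add: SG_p_def add_divide_distrib)
  ultimately show ?thesis using inv_good[OF h g w(1)] unfolding goodP_def by simp
qed

lemma dyadic_mono:
  assumes h: "SG_harmonic f"
    and g: "goodP (f (SG_p 0)) (f (SG_p 1)) (f (SG_p 2))"
    and jk: "j < k" "k \<le> 2 ^ n"
  shows "f (of_nat j / 2 ^ n) < f (of_nat k / 2 ^ n)"
  using jk
proof (induction k)
  case 0 then show ?case by simp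
next
  case (Suc k)
  have s: "f (of_nat k / 2 ^ n) < f (of_nat (Suc k) / 2 ^ n)"
    using dyadic_step[OF h g] Suc.prems by simp
  show ?case
  proof (cases "j = k")
    case True then show ?thesis using s by simp
  next
    case False then show ?thesis using Suc s by simp
  qed
qed



lemma dy_V: "k \<le> 2 ^ n \<Longrightarrow> (of_nat k / 2 ^ n :: complex) \<in> SG_V"
proof (cases "k < 2 ^ n")
  case True
  then obtain w where w: "set w \<subseteq> {1,2}" "length w = n" "SG_Fw w 0 = of_nat k / 2 ^ n"
    using word_exists by blast
  have "SG_Fw w (SG_p 1) \<in> SG_V" using w(1) by (intro V_mem) auto
  then show ?thesis using w by simp
next
  case False
  assume "k \<le> 2 ^ n"
  then have "k = 2 ^ n" using False by simp
  moreover have "SG_Fw [] (SG_p 2) \<in> SG_V" by (intro V_mem) auto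
  ultimately show ?thesis by simp
qed

definition dn :: "nat \<Rightarrow> real \<Rightarrow> real" where
  "dn n t = real (nat \<lfloor>t * 2 ^ n\<rfloor>) / 2 ^ n"

lemma dn_props:
  assumes "0 \<le> t" "t \<le> 1"
  shows "nat \<lfloor>t * 2 ^ n\<rfloor> \<le> 2 ^ n" "dn n t \<le> t" "t - dn n t < (1/2) ^ n" "0 \<le> dn n t"
proof -
  define x where "x = t * 2 ^ n"
  have x0: "x \<ge> 0" using assms by (simp add: x_def)
  have x1: "x \<le> 2 ^ n" using assms by (simp add: x_def)
  have fl: "real (nat \<lfloor>x\<rfloor>) = of_int \<lfloor>x\<rfloor>" using x0 by simp
  have a: "of_int \<lfloor>x\<rfloor> \<le> x" "x < of_int \<lfloor>x\<rfloor> + 1" by linarith+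
  have "real (nat \<lfloor>x\<rfloor>) \<le> 2 ^ n" using fl a x1 by linarith
  then have "real (nat \<lfloor>x\<rfloor>) \<le> real (2 ^ n)" by simp
  then show "nat \<lfloor>t * 2 ^ n\<rfloor> \<le> 2 ^ n" unfolding x_def by (simp only: of_nat_le_iff)
  show "dn n t \<le> t" using fl a unfolding dn_def x_def[symmetric] by (simp add: divide_le_eq x_def)
  have "t - dn n t = (x - of_int \<lfloor>x\<rfloor>) / 2 ^ n" unfolding dn_def x_def[symmetric] fl by (simp add: x_def field_simps)
  also have "\<dots> < 1 / 2 ^ n" by (rule divide_strict_right_mono) (use a in linarith, simp)
  finally show "t - dn n t < (1/2) ^ n" by (simp add: power_divide)
  show "0 \<le> dn n t" by (simp add: dn_def)
qed

lemma dn_lim: "0 \<le> t \<Longrightarrow> t \<le> 1 \<Longrightarrow> (\<lambda>n. dn n t) \<longlonglongrightarrow> t"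
proof -
  assume t: "0 \<le> t" "t \<le> 1"
  have "(\<lambda>n. t - dn n t) \<longlonglongrightarrow> 0"
  proof (rule tendsto_sandwich[of "\<lambda>n. 0" _ _ "\<lambda>n. (1/2::real) ^ n"])
    show "\<forall>\<^sub>F n in sequentially. 0 \<le> t - dn n t" using dn_props[OF t] by simp
    show "\<forall>\<^sub>F n in sequentially. t - dn n t \<le> (1/2) ^ n"
      using dn_props(3)[OF t] by (auto intro!: always_eventually less_imp_le)
    show "(\<lambda>n. (1/2::real) ^ n) \<longlonglongrightarrow> 0" by (rule LIMSEQ_power_zero) simp
  qed simp
  from tendsto_diff[OF tendsto_const[of t] this] show ?thesis by simp
qed

lemma dn_mono: "s \<le> u \<Longrightarrow> nat \<lfloor>s * 2 ^ n\<rfloor> \<le> nat \<lfloor>u * 2 ^ n\<rfloor>"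
  by (intro nat_mono floor_mono mult_right_mono) auto

lemma edge_K: "t \<in> {0..1} \<Longrightarrow> complex_of_real t \<in> SG_K"
proof -
  assume "t \<in> {0..1}"
  then have t: "0 \<le> t" "t \<le> 1" by auto
  show ?thesis unfolding K_eq closure_approachable
  proof (intro allI impI)
    fix e :: real assume e: "e > 0"
    obtain n where n: "(1/2::real) ^ n < e" using real_arch_pow_inv[OF e, of "1/2"] by auto
    define k where "k = nat \<lfloor>t * 2 ^ n\<rfloor>"
    have kV: "(of_nat k / 2 ^ n :: complex) \<in> SG_V" using dn_props(1)[OF t] by (intro dy_V) (simp add: k_def)
    have eq: "(of_nat k / 2 ^ n :: complex) = complex_of_real (dn n t)" by (simp add: dn_def k_def)
    have "dist (complex_of_real (dn n t)) (complex_of_real t) = \<bar>dn n t - t\<bar>"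
      by (simp add: dist_norm of_real_diff[symmetric] del: of_real_diff)
    also have "\<dots> < e" using dn_props[OF t, of n] n by simp
    finally show "\<exists>y\<in>SG_V. dist y (complex_of_real t) < e" using kV eq by metis
  qed
qed

lemma cont_edge: "SG_harmonic f \<Longrightarrow> continuous_on {0..1} (\<lambda>t. f (complex_of_real t))"
  by (rule continuous_on_compose2[of SG_K f]) (auto simp: SG_harmonic_def edge_K intro: continuous_intros)

lemma dyadic_real:
  assumes h: "SG_harmonic f"
    and g: "goodP (f (SG_p 0)) (f (SG_p 1)) (f (SG_p 2))"
    and jk: "j \<le> k" "k \<le> 2 ^ n"
  shows "f (complex_of_real (real j / 2 ^ n)) \<le> f (complex_of_real (real k / 2 ^ n))"
proof (cases "j = k")
  case False
  then have "j < k" using jk by simp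
  from dyadic_mono[OF h g this jk(2)] show ?thesis by simp
qed simp

lemma edge_mono:
  assumes h: "SG_harmonic f"
    and g: "goodP (f (SG_p 0)) (f (SG_p 1)) (f (SG_p 2))"
    and su: "0 \<le> s" "s \<le> u" "u \<le> 1"
  shows "f (complex_of_real s) \<le> f (complex_of_real u)"
proof -
  have s01: "0 \<le> s" "s \<le> 1" and u01: "0 \<le> u" "u \<le> 1" using su by auto
  have le: "f (complex_of_real (dn n s)) \<le> f (complex_of_real (dn n u))" for n
    unfolding dn_def using dn_props(1)[OF u01] dn_mono[OF su(2)]
    by (intro dyadic_real[OF h g]) auto
  have lim: "(\<lambda>n. f (complex_of_real (dn n t))) \<longlonglongrightarrow> f (complex_of_real t)" if "0 \<le> t" "t \<le> 1" for t
  proof -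
    have "dn n t \<in> {0..1}" for n
      using dn_props(2,4)[OF that, of n] that by auto
    then show ?thesis
      using that
      by (intro continuous_on_tendsto_compose[OF cont_edge[OF h] dn_lim[OF that]] always_eventually) auto
  qed
  show ?thesis using LIMSEQ_le[OF lim[OF s01] lim[OF u01]] le by blast
qed

lemma edge_strict:
  assumes h: "SG_harmonic f"
    and g: "goodP (f (SG_p 0)) (f (SG_p 1)) (f (SG_p 2))"
  shows "strict_mono_on {0..1} (SG_edge f)"
proof (rule strict_mono_onI)
  fix t u :: real assume tu: "t \<in> {0..1}" "u \<in> {0..1}" "t < u"
  have "(u - t) / 2 > 0" using tu by simp
  from real_arch_pow_inv[OF this, of "1/2"] obtain n where n: "(1/2::real) ^ n < (u - t) / 2" by auto
  define j where "j = nat \<lfloor>t * 2 ^ n\<rfloor>"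
  have t01: "0 \<le> t" "t \<le> 1" using tu by auto
  have dt: "dn n t \<le> t" "t - dn n t < (1/2)^n" using dn_props[OF t01] by auto
  have dnj: "dn n t = real j / 2 ^ n" by (simp add: dn_def j_def)
  have q1: "t \<le> real (j+1) / 2 ^ n"
  proof -
    have "real (j+1) / 2 ^ n = dn n t + (1/2)^n" using dnj by (simp add: add_divide_distrib power_divide)
    then show ?thesis using dt by linarith
  qed
  have q2e: "real (j+2) / 2 ^ n = dn n t + 2 * (1/2)^n" using dnj by (simp add: add_divide_distrib power_divide)
  have "dn n t + 2 * (1/2)^n < u"
  proof -
    define p where "p = (1/2::real)^n"
    have "dn n t \<le> t" "t - dn n t < p" "p < (u - t) / 2" using dt n by (auto simp: p_def)
    then have "dn n t + 2 * p < u" by argo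
    then show ?thesis by (simp add: p_def)
  qed
  then have q2: "real (j+2) / 2 ^ n \<le> u" by (simp only: q2e)
  have "real (j+2) \<le> real (2 ^ n)"
  proof -
    have "u \<le> 1" using tu by simp
    then have "real (j+2) / 2 ^ n \<le> 1" using q2 by linarith
    then show ?thesis by (simp add: divide_le_eq)
  qed
  then have j2: "j + 2 \<le> 2 ^ n" by (simp only: of_nat_le_iff)
  have "f (complex_of_real t) \<le> f (complex_of_real (real (j+1) / 2 ^ n))"
  proof -
    have "j + 1 \<le> 2 ^ n" using j2 by simp
    then have "real (j + 1) \<le> real (2 ^ n)" by (simp only: of_nat_le_iff)
    then have r1: "real (j+1) / 2 ^ n \<le> 1" by (simp add: divide_le_eq)
    show ?thesis using t01(1) q1 r1 by (rule edge_mono[OF h g])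
  qed
  also have "\<dots> < f (complex_of_real (real (j+2) / 2 ^ n))"
    using dyadic_mono[OF h g, of "j+1" "j+2" n] j2 by simp
  also have "\<dots> \<le> f (complex_of_real u)"
    using q2 tu by (intro edge_mono[OF h g]) auto
  finally show "SG_edge f t < SG_edge f u" by (simp add: edge_eq)
qed



lemma rep_snoc: "replicate (Suc n) x = replicate n x @ [x]"
  by (induction n) auto

lemma chain2:
  assumes h: "SG_harmonic f"
  shows "f (SG_Fw (replicate n 2) (SG_p 2)) = f (SG_p 2) \<and>
    5 ^ n * (f (SG_Fw (replicate n 2) (SG_p 0)) - f (SG_Fw (replicate n 2) (SG_p 1))) = f (SG_p 0) - f (SG_p 1) \<and>
    5 ^ n * (f (SG_Fw (replicate n 2) (SG_p 0)) + f (SG_Fw (replicate n 2) (SG_p 1)) - 2 * f (SG_Fw (replicate n 2) (SG_p 2)))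
      = 3 ^ n * (f (SG_p 0) + f (SG_p 1) - 2 * f (SG_p 2))"
proof (induction n)
  case 0 then show ?case by simp
next
  case (Suc n)
  define w where "w = replicate n (2::nat)"
  have w: "set w \<subseteq> {0,1,2}" by (auto simp: w_def)
  have R: "replicate (Suc n) 2 = w @ [2]" unfolding w_def by (rule rep_snoc)
  define A where "A = f (SG_Fw w (SG_p 0))"
  define B where "B = f (SG_Fw w (SG_p 1))"
  define C where "C = f (SG_Fw w (SG_p 2))"
  note r = rec2[OF h w, folded A_def B_def C_def]
  have IH: "C = f (SG_p 2)" "5 ^ n * (A - B) = f (SG_p 0) - f (SG_p 1)"
    "5 ^ n * (A + B - 2 * C) = 3 ^ n * (f (SG_p 0) + f (SG_p 1) - 2 * f (SG_p 2))"
    using Suc.IH unfolding A_def B_def C_def w_def by auto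
  have e1: "f (SG_Fw (w@[2]) (SG_p 0)) - f (SG_Fw (w@[2]) (SG_p 1)) = (A - B) / 5"
    using r by simp
  have e2: "f (SG_Fw (w@[2]) (SG_p 0)) + f (SG_Fw (w@[2]) (SG_p 1)) - 2 * f (SG_Fw (w@[2]) (SG_p 2)) = 3 * (A + B - 2 * C) / 5"
    using r by simp
  show ?case unfolding R
  proof (intro conjI)
    show "f (SG_Fw (w @ [2]) (SG_p 2)) = f (SG_p 2)" using r IH by simp
    show "5 ^ Suc n * (f (SG_Fw (w @ [2]) (SG_p 0)) - f (SG_Fw (w @ [2]) (SG_p 1))) = f (SG_p 0) - f (SG_p 1)"
      unfolding e1 using IH(2) by simp
    show "5 ^ Suc n * (f (SG_Fw (w @ [2]) (SG_p 0)) + f (SG_Fw (w @ [2]) (SG_p 1)) - 2 * f (SG_Fw (w @ [2]) (SG_p 2)))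
      = 3 ^ Suc n * (f (SG_p 0) + f (SG_p 1) - 2 * f (SG_p 2))"
    proof -
      have "5 ^ Suc n * (3 * (A + B - 2 * C) / 5) = 3 * (5 ^ n * (A + B - 2 * C))" by (simp add: field_simps)
      then show ?thesis unfolding e2 using IH(3) by simp
    qed
  qed
qed

lemma chain1:
  assumes h: "SG_harmonic f"
  shows "f (SG_Fw (replicate n 1) (SG_p 1)) = f (SG_p 1) \<and>
    5 ^ n * (f (SG_Fw (replicate n 1) (SG_p 0)) - f (SG_Fw (replicate n 1) (SG_p 2))) = f (SG_p 0) - f (SG_p 2) \<and>
    5 ^ n * (f (SG_Fw (replicate n 1) (SG_p 0)) + f (SG_Fw (replicate n 1) (SG_p 2)) - 2 * f (SG_Fw (replicate n 1) (SG_p 1)))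
      = 3 ^ n * (f (SG_p 0) + f (SG_p 2) - 2 * f (SG_p 1))"
proof (induction n)
  case 0 then show ?case by simp
next
  case (Suc n)
  define w where "w = replicate n (1::nat)"
  have w: "set w \<subseteq> {0,1,2}" by (auto simp: w_def)
  have R: "replicate (Suc n) 1 = w @ [1]" unfolding w_def by (rule rep_snoc)
  define A where "A = f (SG_Fw w (SG_p 0))"
  define B where "B = f (SG_Fw w (SG_p 1))"
  define C where "C = f (SG_Fw w (SG_p 2))"
  note r = rec1[OF h w, folded A_def B_def C_def]
  have IH: "B = f (SG_p 1)" "5 ^ n * (A - C) = f (SG_p 0) - f (SG_p 2)"
    "5 ^ n * (A + C - 2 * B) = 3 ^ n * (f (SG_p 0) + f (SG_p 2) - 2 * f (SG_p 1))"
    using Suc.IH unfolding A_def B_def C_def w_def by auto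
  have e1: "f (SG_Fw (w@[1]) (SG_p 0)) - f (SG_Fw (w@[1]) (SG_p 2)) = (A - C) / 5"
    using r by simp
  have e2: "f (SG_Fw (w@[1]) (SG_p 0)) + f (SG_Fw (w@[1]) (SG_p 2)) - 2 * f (SG_Fw (w@[1]) (SG_p 1)) = 3 * (A + C - 2 * B) / 5"
    using r by simp
  show ?case unfolding R
  proof (intro conjI)
    show "f (SG_Fw (w @ [1]) (SG_p 1)) = f (SG_p 1)" using r IH by simp
    show "5 ^ Suc n * (f (SG_Fw (w @ [1]) (SG_p 0)) - f (SG_Fw (w @ [1]) (SG_p 2))) = f (SG_p 0) - f (SG_p 2)"
      unfolding e1 using IH(2) by simp
    show "5 ^ Suc n * (f (SG_Fw (w @ [1]) (SG_p 0)) + f (SG_Fw (w @ [1]) (SG_p 2)) - 2 * f (SG_Fw (w @ [1]) (SG_p 1)))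
      = 3 ^ Suc n * (f (SG_p 0) + f (SG_p 2) - 2 * f (SG_p 1))"
    proof -
      have "5 ^ Suc n * (3 * (A + C - 2 * B) / 5) = 3 * (5 ^ n * (A + C - 2 * B))" by (simp add: field_simps)
      then show ?thesis unfolding e2 using IH(3) by simp
    qed
  qed
qed

lemma pos2: "SG_Fw (replicate n 2) (SG_p 1) = complex_of_real (1 - 1 / 2 ^ n)"
proof (induction n)
  case 0 then show ?case by simp
next
  case (Suc n)
  have "SG_Fw (replicate (Suc n) 2) (SG_p 1) = SG_F 2 (SG_Fw (replicate n 2) (SG_p 1))" by simp
  also have "\<dots> = SG_F 2 (complex_of_real (1 - 1 / 2 ^ n))" by (simp only: Suc)
  also have "\<dots> = complex_of_real ((1 - 1 / 2 ^ n + 1) / 2)" by (simp add: SG_F_def)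
  also have "(1 - 1 / 2 ^ n + 1) / 2 = (1 - 1 / 2 ^ Suc n :: real)" by (simp add: field_simps)
  finally show ?case .
qed

lemma pos1: "SG_Fw (replicate n 1) (SG_p 2) = complex_of_real (1 / 2 ^ n)"
proof (induction n)
  case 0 then show ?case by simp
next
  case (Suc n)
  have "SG_Fw (replicate (Suc n) 1) (SG_p 2) = SG_F 1 (SG_Fw (replicate n 1) (SG_p 2))" by simp
  also have "\<dots> = SG_F 1 (complex_of_real (1 / 2 ^ n))" by (simp only: Suc)
  also have "\<dots> = complex_of_real ((1 / 2 ^ n) / 2)" by (simp add: SG_F_def SG_p_def)
  also have "(1 / 2 ^ n) / 2 = (1 / 2 ^ Suc n :: real)" by (simp add: field_simps)
  finally show ?case .
qed

lemma necessity:
  assumes h: "SG_harmonic f" and sm: "strict_mono_on {0..1} (SG_edge f)"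
  shows "goodP (f (SG_p 0)) (f (SG_p 1)) (f (SG_p 2))"
proof -
  define a where "a = f (SG_p 0)"
  define b where "b = f (SG_p 1)"
  define c where "c = f (SG_p 2)"
  have e0: "SG_edge f 0 = b" by (simp add: edge_eq b_def)
  have e1: "SG_edge f 1 = c" by (simp add: edge_eq c_def)
  have bc: "b < c" using strict_mono_onD[OF sm, of 0 1] e0 e1 by simp
  have up: "a \<le> 2 * c - b"
  proof (rule ccontr)
    assume "\<not> a \<le> 2 * c - b"
    then have pos: "a + b - 2 * c > 0" by simp
    obtain n where n: "(a - b) / (a + b - 2 * c) < 3 ^ n" using real_arch_pow[of 3] by auto
    then have n': "a - b < 3 ^ n * (a + b - 2 * c)" using pos by (simp add: pos_divide_less_eq)
    define A where "A = f (SG_Fw (replicate n 2) (SG_p 0))"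
    define B where "B = f (SG_Fw (replicate n 2) (SG_p 1))"
    have ch: "5 ^ n * (A - B) = a - b" "5 ^ n * (A + B - 2 * c) = 3 ^ n * (a + b - 2 * c)"
      using chain2[OF h, of n] unfolding A_def B_def a_def b_def c_def by auto
    have "(5::real) ^ n * (2 * (B - c)) = 5 ^ n * (A + B - 2 * c) - 5 ^ n * (A - B)"
      by (simp add: algebra_simps)
    also have "\<dots> > 0" using ch n' by simp
    finally have "B > c" by (simp add: zero_less_mult_iff)
    moreover have "B < c"
    proof -
      have t: "1 - 1 / 2 ^ n \<in> {0..(1::real)}" "1 - 1 / 2 ^ n < (1::real)" by auto
      have "SG_edge f (1 - 1 / 2 ^ n) < SG_edge f 1" using strict_mono_onD[OF sm t(1) _ t(2)] by simp
      then show ?thesis using e1 pos2[of n] by (simp add: edge_eq B_def)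
    qed
    ultimately show False by simp
  qed
  have lo: "2 * b - c \<le> a"
  proof (rule ccontr)
    assume "\<not> 2 * b - c \<le> a"
    then have pos: "2 * b - a - c > 0" by simp
    obtain n where n: "(c - a) / (2 * b - a - c) < 3 ^ n" using real_arch_pow[of 3] by auto
    then have n': "c - a < 3 ^ n * (2 * b - a - c)" using pos by (simp add: pos_divide_less_eq)
    define A where "A = f (SG_Fw (replicate n 1) (SG_p 0))"
    define C where "C = f (SG_Fw (replicate n 1) (SG_p 2))"
    have ch: "5 ^ n * (A - C) = a - c" "5 ^ n * (A + C - 2 * b) = 3 ^ n * (a + c - 2 * b)"
      using chain1[OF h, of n] unfolding A_def C_def a_def b_def c_def by auto
    have "(5::real) ^ n * (2 * (b - C)) = 5 ^ n * (A - C) - 5 ^ n * (A + C - 2 * b)"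
      by (simp add: algebra_simps)
    also have "\<dots> = (a - c) + 3 ^ n * (2 * b - a - c)" using ch by (simp add: algebra_simps)
    also have "\<dots> > 0" using n' by simp
    finally have "C < b" by (simp add: zero_less_mult_iff)
    moreover have "b < C"
    proof -
      have t: "1 / 2 ^ n \<in> {0..(1::real)}" "(0::real) < 1 / 2 ^ n" by auto
      have "SG_edge f 0 < SG_edge f (1 / 2 ^ n)" using strict_mono_onD[OF sm _ t(1) t(2)] by simp
      then show ?thesis using e0 pos1[of n] by (simp add: edge_eq C_def)
    qed
    ultimately show False by simp
  qed
  show ?thesis unfolding goodP_def a_def[symmetric] b_def[symmetric] c_def[symmetric] using bc up lo by simp
qed

lemma const_K:
  assumes h: "SG_harmonic f" and c: "f (SG_p 0) = c" "f (SG_p 1) = c" "f (SG_p 2) = c"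
  shows "\<forall>x\<in>SG_K. f x = c"
proof -
  have pc: "j \<in> {0,1,2} \<Longrightarrow> f (SG_p j) = c" for j :: nat using c by auto
  have W: "\<forall>j\<in>{0,1,2}. f (SG_Fw w (SG_p j)) = c" if "set w \<subseteq> {0,1,2}" for w
    using that
  proof (induction w rule: rev_induct)
    case Nil then show ?case using pc by simp
  next
    case (snoc i w)
    then have w: "set w \<subseteq> {0,1,2}" and i: "i \<in> {0,1,2}" by auto
    note IH = snoc.IH[OF w]
    show ?case
    proof
      fix j :: nat assume j: "j \<in> {0,1,2}"
      show "f (SG_Fw (w @ [i]) (SG_p j)) = c"
      proof (cases "i = j")
        case True
        then show ?thesis using IH j by (simp only: Fw_snoc comp_apply F_fix)
      next
        case False
        have k: "{i, j, 3 - i - j} = {0,1,2::nat}" using i j False by auto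
        have k3: "3 - i - j \<in> {0,1,2}" using i j False by auto
        have "f (SG_Fw w (SG_p i)) = c" "f (SG_Fw w (SG_p j)) = c" "f (SG_Fw w (SG_p (3 - i - j))) = c"
          using IH i j k3 by blast+
        then show ?thesis using harm_mid[OF h w k] by simp
      qed
    qed
  qed
  have V: "f x = c" if xV: "x \<in> SG_V" for x
  proof -
    obtain w j where "x = SG_Fw w (SG_p j)" "set w \<subseteq> {0,1,2}" "j \<le> 2"
      using xV unfolding SG_V_def by blast
    moreover have "j \<in> {0,1,2}" using \<open>j \<le> 2\<close> by auto
    ultimately show ?thesis using W[of w] by (simp only: Ball_def)
  qed
  have "continuous_on (closure SG_V) f" using h unfolding SG_harmonic_def K_eq by simp
  then show ?thesis unfolding K_eq using continuous_constant_on_closure[of SG_V f c] V by blast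
qed

lemma final_arith:
  fixes \<alpha> \<beta> \<gamma> :: real
  assumes "\<not> (\<alpha> = \<beta> \<and> \<beta> = \<gamma>)"
  shows "(goodP \<alpha> \<beta> \<gamma> \<or> goodP (-\<alpha>) (-\<beta>) (-\<gamma>)) \<longleftrightarrow>
    (3 * \<beta> - (\<alpha> + \<beta> + \<gamma>)) * (3 * \<gamma> - (\<alpha> + \<beta> + \<gamma>)) \<le> 0"
proof
  define P where "P = 3 * \<beta> - (\<alpha> + \<beta> + \<gamma>)"
  define Q where "Q = 3 * \<gamma> - (\<alpha> + \<beta> + \<gamma>)"
  assume "goodP \<alpha> \<beta> \<gamma> \<or> goodP (-\<alpha>) (-\<beta>) (-\<gamma>)"
  then have "(P \<le> 0 \<and> 0 \<le> Q) \<or> (0 \<le> P \<and> Q \<le> 0)"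
    unfolding goodP_def P_def Q_def by linarith
  then have "P * Q \<le> 0" using mult_nonpos_nonneg mult_nonneg_nonpos by blast
  then show "(3 * \<beta> - (\<alpha> + \<beta> + \<gamma>)) * (3 * \<gamma> - (\<alpha> + \<beta> + \<gamma>)) \<le> 0"
    by (simp only: P_def Q_def)
next
  define P where "P = 3 * \<beta> - (\<alpha> + \<beta> + \<gamma>)"
  define Q where "Q = 3 * \<gamma> - (\<alpha> + \<beta> + \<gamma>)"
  assume "(3 * \<beta> - (\<alpha> + \<beta> + \<gamma>)) * (3 * \<gamma> - (\<alpha> + \<beta> + \<gamma>)) \<le> 0"
  then have "P * Q \<le> 0" by (simp only: P_def Q_def)
  then have c: "(P \<le> 0 \<and> 0 \<le> Q) \<or> (0 \<le> P \<and> Q \<le> 0)" by (simp add: mult_le_0_iff) blast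
  have ne: "\<beta> \<noteq> \<gamma> \<or> \<alpha> \<noteq> \<beta>" using assms by blast
  from c show "goodP \<alpha> \<beta> \<gamma> \<or> goodP (-\<alpha>) (-\<beta>) (-\<gamma>)"
  proof
    assume "P \<le> 0 \<and> 0 \<le> Q"
    then have "\<beta> < \<gamma> \<and> 2 * \<beta> - \<gamma> \<le> \<alpha> \<and> \<alpha> \<le> 2 * \<gamma> - \<beta>"
      using ne unfolding P_def Q_def by linarith
    then show ?thesis unfolding goodP_def by blast
  next
    assume "0 \<le> P \<and> Q \<le> 0"
    then have "- \<beta> < - \<gamma> \<and> 2 * (- \<beta>) - (- \<gamma>) \<le> - \<alpha> \<and> - \<alpha> \<le> 2 * (- \<gamma>) - (- \<beta>)"
      using ne unfolding P_def Q_def by linarith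
    then show ?thesis unfolding goodP_def by blast
  qed
qed

lemma main_gen:
  assumes h: "SG_harmonic f"
  shows "(strict_mono_on {0..1} (SG_edge f) \<longleftrightarrow> goodP (f (SG_p 0)) (f (SG_p 1)) (f (SG_p 2))) \<and>
    (strict_mono_on {0..1} (\<lambda>t. - SG_edge f t) \<longleftrightarrow> goodP (- f (SG_p 0)) (- f (SG_p 1)) (- f (SG_p 2)))"
proof -
  have hn: "SG_harmonic (\<lambda>x. - f x)" by (rule harm_neg[OF h])
  have eqn: "SG_edge (\<lambda>x. - f x) = (\<lambda>t. - SG_edge f t)" by (auto simp: SG_edge_def)
  have 1: "strict_mono_on {0..1} (SG_edge f) \<longleftrightarrow> goodP (f (SG_p 0)) (f (SG_p 1)) (f (SG_p 2))"
    using necessity[OF h] edge_strict[OF h] by blast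
  have 2: "strict_mono_on {0..1} (SG_edge (\<lambda>x. - f x)) \<longleftrightarrow> goodP (- f (SG_p 0)) (- f (SG_p 1)) (- f (SG_p 2))"
    using necessity[OF hn] edge_strict[OF hn] by blast
  show ?thesis using 1 2 unfolding eqn by blast
qed

theorem theorem3:
  fixes f :: "complex \<Rightarrow> real" and \<alpha> \<beta> \<gamma> :: real
  assumes "SG_harmonic f"
    and "f (SG_p 0) = \<alpha>" and "f (SG_p 1) = \<beta>" and "f (SG_p 2) = \<gamma>"
  shows "(strict_mono_on {0..1} (SG_edge f) \<longleftrightarrow>
            \<beta> < \<gamma> \<and> 2 * \<beta> - \<gamma> \<le> \<alpha> \<and> \<alpha> \<le> 2 * \<gamma> - \<beta>)
       \<and> ((\<not> (\<exists>c. \<forall>x\<in>SG_K. f x = c)) \<longrightarrow>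
            ((strict_mono_on {0..1} (SG_edge f) \<or> strict_mono_on {0..1} (\<lambda>t. - SG_edge f t))
              \<longleftrightarrow> (3 * \<beta> - (\<alpha> + \<beta> + \<gamma>)) * (3 * \<gamma> - (\<alpha> + \<beta> + \<gamma>)) \<le> 0))"
proof -
  note m = main_gen[OF assms(1), unfolded assms(2-4)]
  show ?thesis
  proof (intro conjI impI)
    show "strict_mono_on {0..1} (SG_edge f) \<longleftrightarrow>
            \<beta> < \<gamma> \<and> 2 * \<beta> - \<gamma> \<le> \<alpha> \<and> \<alpha> \<le> 2 * \<gamma> - \<beta>"
      using m unfolding goodP_def by blast
  next
    assume nc: "\<not> (\<exists>c. \<forall>x\<in>SG_K. f x = c)"
    have "\<not> (\<alpha> = \<beta> \<and> \<beta> = \<gamma>)"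
    proof
      assume eq: "\<alpha> = \<beta> \<and> \<beta> = \<gamma>"
      have c1: "f (SG_p 1) = \<alpha>" using assms(3) eq by simp
      have c2: "f (SG_p 2) = \<alpha>" using assms(4) eq by simp
      have "\<forall>x\<in>SG_K. f x = \<alpha>" by (rule const_K[OF assms(1) assms(2) c1 c2])
      then show False using nc by blast
    qed
    from final_arith[OF this] m
    show "(strict_mono_on {0..1} (SG_edge f) \<or> strict_mono_on {0..1} (\<lambda>t. - SG_edge f t))
              \<longleftrightarrow> (3 * \<beta> - (\<alpha> + \<beta> + \<gamma>)) * (3 * \<gamma> - (\<alpha> + \<beta> + \<gamma>)) \<le> 0"
      by blast
  qed
qed

end
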